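(* Consider the discrete-time system $x(t+1) = A x(t) + C v(t) + w$ for $t=0,1,2,\ldots$, with $A \in \mathbb{R}^{d_x\times d_x}$, $C \in \mathbb{R}^{d_x \times d_v}$, constant $w \in \mathbb{R}^{d_x}$, and disturbance input $v(t) \in \mathcal V = \langle c_{\mathcal V} \mid G_{\mathcal V}\rangle$, where $c_{\mathcal V} \in \mathbb{R}^{d_v}$ and $G_{\mathcal V} \in \mathbb{R}^{d_v \times n_{\mathcal V}}$. Let $\mathcal X = \{ x \in \mathbb{R}^{d_x} \mid \underline x \leq x \leq \overline x\}$ and $T \geq 0$ an integer. Let $G_{\mathcal I} \in \mathbb{R}^{d_x \times n_{\mathcal I}}$, $\alpha \in \mathbb{R}^{d_x}$, $\gamma \in \mathbb{R}^{n_{\mathcal I}}$ with $\gamma\geq 0$, $\Gamma = \mathrm{diag}(\gamma)$, and $\mathcal I = \langle \alpha \mid G_{\mathcal I}\Gamma\rangle$. If for all $t = 0,\ldots,T$ \[ A^t\alpha + \sum_{s=0}^{t-1} A^{t-1-s}(C c_{\mathcal V} + w) - |A^t G_{\mathcal I}|\gamma - \sum_{s=0}^{t-1} |A^{t-1-s} C G_{\mathcal V}|\mathbf{1}_{n_{\mathcal V}} \geq \underline x, \] \[ A^t\alpha + \sum_{s=0}^{t-1} A^{t-1-s}(C c_{\mathcal V} + w) + |A^t G_{\mathcal I}|\gamma + \sum_{s=0}^{t-1} |A^{t-1-s} C G_{\mathcal V}|\mathbf{1}_{n_{\mathcal V}} \leq \overline x, \] then $\mathcal I \subseteq \mathrm{Inv}_{[0,T]}(\mathcal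 X)$, where $\mathrm{Inv}_{[0,T]}(\mathcal X)$ is the set of $x(0) \in \mathcal X$ such that for every disturbance signal with $v(t) \in \mathcal V$ for all $t$, the resulting trajectory satisfies $x(t) \in \mathcal X$ for all $t = 0,\ldots,T$.
   Context: Vector inequalities are elementwise; $|M|$ is the elementwise absolute value; $\mathbf{1}_n$ is the all-ones vector in $\mathbb{R}^n$. The notation $\langle c \mid G\rangle$ denotes the zonotope $\{c + G\lambda : \lambda \in [-1,1]^n\}$. $\mathrm{diag}(\gamma)$ is the diagonal matrix with $\gamma$ on its diagonal. *)

theory Defs
  imports "HOL-Analysis.Analysis"
begin

primrec matpow :: "real^'n^'n \<Rightarrow> nat \<Rightarrow> real^'n^'n" where
  "matpow A 0 = mat 1"
| "matpow A (Suc t) = A ** matpow A t"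

definition mabs :: "real^'n^'m \<Rightarrow> real^'n^'m" where
  "mabs M = (\<chi> i j. \<bar>M $ i $ j\<bar>)"

definition ones :: "real^'n" where
  "ones = (\<chi> i. 1)"

definition diagm :: "real^'n \<Rightarrow> real^'n^'n" where
  "diagm g = (\<chi> i j. if i = j then g $ i else 0)"

definition zonotope :: "real^'m \<Rightarrow> real^'n^'m \<Rightarrow> (real^'m) set" where
  "zonotope c G = {c + G *v lam | lam. \<forall>i. \<bar>lam $ i\<bar> \<le> 1}"

definition box_set :: "real^'n \<Rightarrow> real^'n \<Rightarrow> (real^'n) set" where
  "box_set lo hi = {x. \<forall>i. lo $ i \<le> x $ i \<and> x $ i \<le> hi $ i}"

primrec traj :: "real^'dx^'dx \<Rightarrow> real^'dv^'dx \<Rightarrow> real^'dx \<Rightarrow> real^'dx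
    \<Rightarrow> (nat \<Rightarrow> real^'dv) \<Rightarrow> nat \<Rightarrow> real^'dx" where
  "traj A C w x0 v 0 = x0"
| "traj A C w x0 v (Suc t) = A *v traj A C w x0 v t + C *v v t + w"

definition Inv :: "real^'dx^'dx \<Rightarrow> real^'dv^'dx \<Rightarrow> real^'dx \<Rightarrow> (real^'dv) set
    \<Rightarrow> nat \<Rightarrow> (real^'dx) set \<Rightarrow> (real^'dx) set" where
  "Inv A C w V T X = {x0 \<in> X. \<forall>v. (\<forall>t. v t \<in> V) \<longrightarrow>
      (\<forall>t\<le>T. traj A C w x0 v t \<in> X)}"

end

theory Submission
  imports Defs
begin

lemma traj_closed:
  "traj A C w x0 v t = matpow A t *v x0 + (\<Sum>s<t. matpow A (t - 1 - s) *v (C *v v s + w))"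
proof (induction t)
  case 0 then show ?case by simp
next
  case (Suc t)
  have "(\<Sum>s<Suc t. matpow A (Suc t - 1 - s) *v (C *v v s + w))
      = (\<Sum>s<t. matpow A (t - s) *v (C *v v s + w)) + (C *v v t + w)"
    by simp
  also have "(\<Sum>s<t. matpow A (t - s) *v (C *v v s + w))
      = (\<Sum>s<t. A *v (matpow A (t - 1 - s) *v (C *v v s + w)))"
  proof (rule sum.cong[OF refl])
    fix s assume "s \<in> {..<t}"
    then have "t - s = Suc (t - 1 - s)" by auto
    then show "matpow A (t - s) *v (C *v v s + w) = A *v (matpow A (t - 1 - s) *v (C *v v s + w))"
      by (simp add: matrix_vector_mul_assoc)
  qed
  also have "\<dots> = A *v (\<Sum>s<t. matpow A (t - 1 - s) *v (C *v v s + w))"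
    by (simp add: linear_sum[OF matrix_vector_mul_linear] o_def)
  finally show ?case using Suc
    by (simp add: matrix_vector_right_distrib matrix_vector_mul_assoc algebra_simps)
qed

lemma abs_mv_le:
  fixes M :: "real^'n^'m"
  assumes "\<forall>j. \<bar>u $ j\<bar> \<le> b $ j"
  shows "\<bar>(M *v u) $ i\<bar> \<le> (mabs M *v b) $ i"
proof -
  have "\<bar>(M *v u) $ i\<bar> = \<bar>\<Sum>j\<in>UNIV. M $ i $ j * u $ j\<bar>"
    by (simp add: matrix_vector_mult_def)
  also have "\<dots> \<le> (\<Sum>j\<in>UNIV. \<bar>M $ i $ j * u $ j\<bar>)" by (rule sum_abs)
  also have "\<dots> \<le> (\<Sum>j\<in>UNIV. \<bar>M $ i $ j\<bar> * b $ j)"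
    by (rule sum_mono) (simp add: abs_mult assms mult_left_mono)
  also have "\<dots> = (mabs M *v b) $ i"
    by (simp add: matrix_vector_mult_def mabs_def)
  finally show ?thesis .
qed

theorem proposition4p3:
  fixes A :: "real^'dx^'dx" and C :: "real^'dv^'dx" and w :: "real^'dx"
    and cV :: "real^'dv" and GV :: "real^'nV^'dv"
    and xlo xhi :: "real^'dx" and T :: nat
    and GI :: "real^'nI^'dx" and \<alpha> :: "real^'dx" and \<gamma> :: "real^'nI"
  assumes gamma_nonneg: "\<forall>i. \<gamma> $ i \<ge> 0"
    and lower: "\<forall>t\<le>T. \<forall>i. xlo $ i \<le>
      (matpow A t *v \<alpha> + (\<Sum>s<t. matpow A (t - 1 - s) *v (C *v cV + w))
       - mabs (matpow A t ** GI) *v \<gamma>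
       - (\<Sum>s<t. mabs (matpow A (t - 1 - s) ** C ** GV) *v ones)) $ i"
    and upper: "\<forall>t\<le>T. \<forall>i.
      (matpow A t *v \<alpha> + (\<Sum>s<t. matpow A (t - 1 - s) *v (C *v cV + w))
       + mabs (matpow A t ** GI) *v \<gamma>
       + (\<Sum>s<t. mabs (matpow A (t - 1 - s) ** C ** GV) *v ones)) $ i \<le> xhi $ i"
  shows "zonotope \<alpha> (GI ** diagm \<gamma>) \<subseteq> Inv A C w (zonotope cV GV) T (box_set xlo xhi)"
proof
  fix x0 assume "x0 \<in> zonotope \<alpha> (GI ** diagm \<gamma>)"
  then obtain lam where x0: "x0 = \<alpha> + (GI ** diagm \<gamma>) *v lam" and lam: "\<forall>i. \<bar>lam $ i\<bar> \<le> 1"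
    unfolding zonotope_def by auto
  define u where "u = diagm \<gamma> *v lam"
  have u: "\<forall>j. \<bar>u $ j\<bar> \<le> \<gamma> $ j"
  proof
    fix j
    have "u $ j = \<gamma> $ j * lam $ j"
      unfolding u_def diagm_def matrix_vector_mult_def
      apply (simp add: if_distrib[of "\<lambda>f. f (lam $ _)"] cong: if_cong)
      apply (subst sum.cong[OF refl, of _ _ "\<lambda>ja. if j = ja then \<gamma>$ja*lam$ja else 0"])
       apply auto
      done
    then show "\<bar>u $ j\<bar> \<le> \<gamma> $ j"
      using lam gamma_nonneg by (simp add: abs_mult mult_left_le)
  qed
  have x0': "x0 = \<alpha> + GI *v u" unfolding x0 u_def by (simp add: matrix_vector_mul_assoc)
  have main: "traj A C w x0 v t \<in> box_set xlo xhi"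
    if v: "\<forall>t. v t \<in> zonotope cV GV" and tT: "t \<le> T" for v t
  proof -
    have "\<forall>s. \<exists>mu. v s = cV + GV *v mu \<and> (\<forall>i. \<bar>mu $ i\<bar> \<le> 1)"
      using v unfolding zonotope_def by blast
    then obtain mu where mu: "\<And>s. v s = cV + GV *v mu s" "\<And>s i. \<bar>mu s $ i\<bar> \<le> 1"
      by metis
    define a where "a = matpow A t *v \<alpha> + (\<Sum>s<t. matpow A (t - 1 - s) *v (C *v cV + w))"
    define b where "b = (matpow A t ** GI) *v u"
    define c where "c = (\<Sum>s<t. (matpow A (t - 1 - s) ** C ** GV) *v mu s)"
    have "traj A C w x0 v t = a + b + c"
    proof -
      have "\<And>s. matpow A (t - 1 - s) *v (C *v v s + w)
          = matpow A (t - 1 - s) *v (C *v cV + w) + (matpow A (t - 1 - s) ** C ** GV) *v mu s"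
        by (simp add: mu matrix_mul_assoc matrix_vector_right_distrib matrix_vector_mul_assoc algebra_simps)
      then show ?thesis
        unfolding traj_closed a_def b_def c_def x0'
        by (simp add: sum.distrib matrix_vector_right_distrib matrix_vector_mul_assoc algebra_simps)
    qed
    moreover have "\<bar>b $ i\<bar> \<le> (mabs (matpow A t ** GI) *v \<gamma>) $ i" for i
      unfolding b_def by (rule abs_mv_le[OF u])
    moreover have "\<bar>c $ i\<bar> \<le> (\<Sum>s<t. mabs (matpow A (t - 1 - s) ** C ** GV) *v ones) $ i" for i
    proof -
      have "\<bar>c $ i\<bar> = \<bar>\<Sum>s<t. ((matpow A (t - 1 - s) ** C ** GV) *v mu s) $ i\<bar>"
        unfolding c_def by simp
      also have "\<dots> \<le> (\<Sum>s<t. \<bar>((matpow A (t - 1 - s) ** C ** GV) *v mu s) $ i\<bar>)"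
        by (rule sum_abs)
      also have "\<dots> \<le> (\<Sum>s<t. (mabs (matpow A (t - 1 - s) ** C ** GV) *v ones) $ i)"
        by (rule sum_mono, rule abs_mv_le) (simp add: ones_def mu(2))
      finally show ?thesis by simp
    qed
    moreover note bb = calculation
    show ?thesis unfolding box_set_def
    proof (intro CollectI allI)
      fix i
      have l: "xlo $ i \<le> a $ i - (mabs (matpow A t ** GI) *v \<gamma>) $ i
          - (\<Sum>s<t. mabs (matpow A (t - 1 - s) ** C ** GV) *v ones) $ i"
        using lower tT unfolding a_def by (simp only: vector_minus_component)
      have h: "a $ i + (mabs (matpow A t ** GI) *v \<gamma>) $ i
          + (\<Sum>s<t. mabs (matpow A (t - 1 - s) ** C ** GV) *v ones) $ i \<le> xhi $ i"
        using upper tT unfolding a_def by (simp only: vector_add_component)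
      have e: "traj A C w x0 v t $ i = a $ i + b $ i + c $ i" using bb(1) by simp
      show "xlo $ i \<le> traj A C w x0 v t $ i \<and> traj A C w x0 v t $ i \<le> xhi $ i"
        using l h e bb(2)[of i] bb(3)[of i] by (simp only: abs_le_iff) linarith
    qed
  qed
  show "x0 \<in> Inv A C w (zonotope cV GV) T (box_set xlo xhi)"
    unfolding Inv_def
  proof (intro CollectI conjI allI impI)
    have "traj A C w x0 (\<lambda>_. cV) 0 \<in> box_set xlo xhi"
      by (rule main) (auto simp: zonotope_def intro!: exI[of _ 0])
    then show "x0 \<in> box_set xlo xhi" by simp
  next
    fix v :: "nat \<Rightarrow> real^'dv" and t :: nat assume "\<forall>t. v t \<in> zonotope cV GV" "t \<le> T"
    then show "traj A C w x0 v t \<in> box_set xlo xhi" by (rule main)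
  qed
qed

end
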